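(* Let $T$ be an $n$-simplex, $\ell\in\{1,\dots,n-1\}$, and let non-negative integers $r_{\ell-1},r_\ell$ satisfy $r_{\ell-1}\ge 2r_\ell$. Then the sets $$D(f,r_\ell)\setminus\Big[\bigcup_{e\in\Delta_{\ell-1}(f)}D(e,r_{\ell-1})\Big],\qquad f\in\Delta_\ell(T),$$ are pairwise disjoint.
   Context: $\mathbb N$ includes $0$; $\mathbb T^n_k=\{\alpha\in\mathbb N^{n+1}:\sum_i\alpha_i=k\}$ for a fixed integer $k\ge0$. $\Delta_\ell(T)$ is the set of $\ell$-dimensional faces of $T$; a face $f$ is identified with its vertex index set $f\subseteq\{0,\dots,n\}$, $f^*=\{0,\dots,n\}\setminus f$, and $\Delta_{\ell-1}(f)$ is the set of $(\ell-1)$-dimensional faces of $f$. $D(f,r)=\{\alpha\in\mathbb T^n_k:\sum_{i\in f^*}\alpha_i\le r\}$. *)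

theory Defs
  imports Main
begin

text \<open>Multi-indices alpha in N^(n+1) are represented as functions nat => nat
  vanishing outside {0..n}.\<close>
definition lattice_T :: "nat \<Rightarrow> nat \<Rightarrow> (nat \<Rightarrow> nat) set" where
  "lattice_T n k = {\<alpha>. (\<forall>i>n. \<alpha> i = 0) \<and> (\<Sum>i\<in>{0..n}. \<alpha> i) = k}"

text \<open>l-dimensional faces of the n-simplex, identified with vertex index sets.\<close>
definition faces :: "nat \<Rightarrow> nat \<Rightarrow> nat set set" where
  "faces n l = {f. f \<subseteq> {0..n} \<and> card f = l + 1}"

text \<open>(l-1)-dimensional faces of a face f (f has l+1 vertices).\<close>
definition subfaces :: "nat set \<Rightarrow> nat \<Rightarrow> nat set set" where
  "subfaces f l = {e. e \<subseteq> f \<and> card e = l}"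

definition compl_face :: "nat \<Rightarrow> nat set \<Rightarrow> nat set" where
  "compl_face n f = {0..n} - f"

definition D :: "nat \<Rightarrow> nat \<Rightarrow> nat set \<Rightarrow> nat \<Rightarrow> (nat \<Rightarrow> nat) set" where
  "D n k f r = {\<alpha> \<in> lattice_T n k. (\<Sum>i\<in>compl_face n f. \<alpha> i) \<le> r}"

end

theory Submission
  imports Defs
begin

lemma key:
  fixes f g :: "nat set" and \<alpha> :: "nat \<Rightarrow> nat"
  assumes f: "f \<in> faces n l" and g: "g \<in> faces n l" and fg: "f \<noteq> g"
    and af: "\<alpha> \<in> D n k f r" and ag: "\<alpha> \<in> D n k g r" and rr: "r' \<ge> 2 * r"
  shows "\<exists>e\<in>subfaces f l. \<alpha> \<in> D n k e r'"
proof -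
  have fs: "f \<subseteq> {0..n}" "card f = l + 1" and gs: "g \<subseteq> {0..n}" "card g = l + 1"
    using f g by (auto simp: faces_def)
  have ff: "finite f" using fs finite_subset by blast
  have gf: "finite g" using gs finite_subset by blast
  have "\<not> f \<subseteq> g"
  proof
    assume "f \<subseteq> g"
    then have "f = g" using card_subset_eq[OF gf] fs gs by auto
    then show False using fg by simp
  qed
  then have "f \<inter> g \<subset> f" by blast
  then have "card (f \<inter> g) < card f" using ff psubset_card_mono by blast
  then have c: "card (f \<inter> g) \<le> l" using fs by simp
  obtain e where e: "f \<inter> g \<subseteq> e" "e \<subseteq> f" "card e = l"
    using exists_subset_between[OF c _ _ ff] fs by auto
  have ef: "finite e" using e ff finite_subset by blast
  have split: "compl_face n e = compl_face n f \<union> (f - e)"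
    using e fs by (auto simp: compl_face_def)
  have disj: "compl_face n f \<inter> (f - e) = {}" by (auto simp: compl_face_def)
  have sub: "f - e \<subseteq> compl_face n g" using e fs by (auto simp: compl_face_def)
  have fin1: "finite (compl_face n f)" "finite (compl_face n g)" by (auto simp: compl_face_def)
  have "(\<Sum>i\<in>compl_face n e. \<alpha> i) = (\<Sum>i\<in>compl_face n f. \<alpha> i) + (\<Sum>i\<in>f - e. \<alpha> i)"
    unfolding split by (rule sum.union_disjoint) (use fin1 ff disj in auto)
  also have "(\<Sum>i\<in>f - e. \<alpha> i) \<le> (\<Sum>i\<in>compl_face n g. \<alpha> i)"
    by (rule sum_mono2[OF fin1(2) sub]) simp
  finally have "(\<Sum>i\<in>compl_face n e. \<alpha> i) \<le> (\<Sum>i\<in>compl_face n f. \<alpha> i) + (\<Sum>i\<in>compl_face n g. \<alpha> i)"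
    by simp
  also have "\<dots> \<le> r'" using af ag rr by (auto simp: D_def)
  finally have "\<alpha> \<in> D n k e r'" using af by (auto simp: D_def)
  moreover have "e \<in> subfaces f l" using e by (auto simp: subfaces_def)
  ultimately show ?thesis by blast
qed

theorem mainTheorem5:
  fixes n k l r_lm1 r_l :: nat
  assumes "1 \<le> l" and "l \<le> n - 1" and "r_lm1 \<ge> 2 * r_l"
  shows "\<forall>f\<in>faces n l. \<forall>g\<in>faces n l. f \<noteq> g \<longrightarrow>
           disjnt (D n k f r_l - (\<Union>e\<in>subfaces f l. D n k e r_lm1))
                  (D n k g r_l - (\<Union>e\<in>subfaces g l. D n k e r_lm1))"
proof (intro ballI impI)
  fix f g assume f: "f \<in> faces n l" and g: "g \<in> faces n l" and fg: "f \<noteq> g"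
  show "disjnt (D n k f r_l - (\<Union>e\<in>subfaces f l. D n k e r_lm1))
                  (D n k g r_l - (\<Union>e\<in>subfaces g l. D n k e r_lm1))"
    unfolding disjnt_def
  proof (rule ccontr)
    assume "(D n k f r_l - (\<Union>e\<in>subfaces f l. D n k e r_lm1)) \<inter>
                  (D n k g r_l - (\<Union>e\<in>subfaces g l. D n k e r_lm1)) \<noteq> {}"
    then obtain \<alpha> where a: "\<alpha> \<in> D n k f r_l" "\<alpha> \<in> D n k g r_l"
      "\<alpha> \<notin> (\<Union>e\<in>subfaces f l. D n k e r_lm1)" by blast
    from key[OF f g fg a(1,2) assms(3)] a(3) show False by blast
  qed
qed

end
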